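(* Let $\{\Delta_1,\dots,\Delta_s\}$ be a nef-partition in $M_\mathbb{R}$ with $\operatorname{Conv}(\cup_i\Delta_i)$ reflexive, let $K\subset\overline M_\mathbb{R}$ be its associated cone and $\deg^\vee=(1,\dots,1;0)$. Let $\{\tilde\Delta_1,\dots,\tilde\Delta_s\}$ be another nef-partition of $\operatorname{Conv}(\cup_i\Delta_i)$. Then there exist nonzero $\tilde e_1,\dots,\tilde e_s\in K^\vee\cap\overline N$ with $\sum_i\tilde e_i=\deg^\vee$ such that $\tilde\Delta_i=p(\tilde S_i)$ for all $i$ (i.e. $\{\tilde\Delta_i\}$ is obtained from the reflexive Gorenstein cone), if and only if, after renumbering the $\tilde\Delta_i$, the divisors $\tilde{\mathcal L}_i$ and $\mathcal L_i$ on $X(\Sigma)$ are linearly equivalent for every $i$.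
   Context: $M\cong\mathbb{Z}^d$, $N$ its dual. A nef-partition (of length $s$) of $\operatorname{Conv}(\cup_i\Delta_i)$ is a collection of lattice polytopes $\Delta_1,\dots,\Delta_s\subset M_\mathbb{R}$, each containing $0$, whose Minkowski sum is a reflexive polytope (a lattice polytope with $0$ in its interior whose dual $\{y:\langle x,y\rangle\ge-1\ \forall x\}$ is a lattice polytope). $\overline M=\mathbb{Z}^s\oplus M$, $\overline N=\mathbb{Z}^s\oplus N$ with the natural pairing; $p:\overline M\to M$ the projection. $K=\{(a_1,\dots,a_s;x):a_i\ge0,\ x\in\sum a_i\Delta_i\}$, $K^\vee$ its dual cone in $\overline N_\mathbb{R}$. For such $\tilde e_i$, $\tilde S_i=\{x\in K:\langle x,\tilde e_i\rangle=1,\ \langle x,\tilde e_j\rangle=0\ (j\ne i)\}$. $\Sigma=\{0\}\cup\{\mathbb{R}_{\ge0}\theta:\theta\text{ a face of }\operatorname{Conv}(\cup_i\Delta_i)\}$, a fan in $M_\mathbb{R}$ defining the toric variety $X(\Sigma)$; for a vertex $\rho$ of $\operatorname{Conv}(\cup\Delta_i)$, $D_\rho$ is the torus-invariant divisor of the ray $\mathbb{R}_{\ge0}\rho$. $\mathcal L_i=\sum_{\rho\in\operatorname{Ver}(\Delta_i)\setminus\{0\}}D_\rho$ and $\tilde{\mathcal L}_i=\sum_{\rho\in\operatorname{Ver}(\tilde\Delta_i)\setminus\{0\}}D_\rho$, where $\operatorname{Ver}$ denotes the vertex set. *)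

theory Defs
  imports "HOL-Analysis.Analysis"
begin

text \<open>M_R = real^'d (M = integer points), the index set of a nef-partition is the
finite type 's.  Overline M_R = (real^'s) \<times> (real^'d), with the product inner product
as the natural pairing.\<close>

definition lattice_pt :: "real^'d \<Rightarrow> bool" where
  "lattice_pt x \<longleftrightarrow> (\<forall>i. x $ i \<in> \<int>)"

definition lattice_pt2 :: "(real^'s) \<times> (real^'d) \<Rightarrow> bool" where
  "lattice_pt2 y \<longleftrightarrow> (\<forall>i. fst y $ i \<in> \<int>) \<and> lattice_pt (snd y)"

definition lattice_polytope :: "(real^'d) set \<Rightarrow> bool" where
  "lattice_polytope P \<longleftrightarrow> (\<exists>S. finite S \<and> (\<forall>x\<in>S. lattice_pt x) \<and> P = convex hull S)"

definition polar_dual :: "(real^'d) set \<Rightarrow> (real^'d) set" where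
  "polar_dual P = {y. \<forall>x\<in>P. x \<bullet> y \<ge> -1}"

definition reflexive_polytope :: "(real^'d) set \<Rightarrow> bool" where
  "reflexive_polytope P \<longleftrightarrow> lattice_polytope P \<and> 0 \<in> interior P \<and> lattice_polytope (polar_dual P)"

definition minkowski_sum :: "('s::finite \<Rightarrow> (real^'d) set) \<Rightarrow> (real^'d) set" where
  "minkowski_sum \<Delta> = {y. \<exists>x. (\<forall>i. x i \<in> \<Delta> i) \<and> y = (\<Sum>i\<in>UNIV. x i)}"

definition nef_partition :: "('s::finite \<Rightarrow> (real^'d) set) \<Rightarrow> bool" where
  "nef_partition \<Delta> \<longleftrightarrow> (\<forall>i. lattice_polytope (\<Delta> i) \<and> 0 \<in> \<Delta> i)
      \<and> reflexive_polytope (minkowski_sum \<Delta>)"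

definition hull_union :: "('s::finite \<Rightarrow> (real^'d) set) \<Rightarrow> (real^'d) set" where
  "hull_union \<Delta> = convex hull (\<Union>i. \<Delta> i)"

definition vertices :: "(real^'d) set \<Rightarrow> (real^'d) set" where
  "vertices P = {v. v extreme_point_of P}"

definition nef_cone :: "('s::finite \<Rightarrow> (real^'d) set) \<Rightarrow> ((real^'s) \<times> (real^'d)) set" where
  "nef_cone \<Delta> = {(a, x). (\<forall>i. a $ i \<ge> 0) \<and> x \<in> minkowski_sum (\<lambda>i. (\<lambda>v. a $ i *\<^sub>R v) ` \<Delta> i)}"

definition dual_cone :: "((real^'s) \<times> (real^'d)) set \<Rightarrow> ((real^'s) \<times> (real^'d)) set" where
  "dual_cone K = {y. \<forall>x\<in>K. x \<bullet> y \<ge> 0}"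

definition deg_dual :: "(real^'s) \<times> (real^'d)" where
  "deg_dual = ((\<chi> i. 1), 0)"

definition S_tilde :: "((real^'s) \<times> (real^'d)) set \<Rightarrow> ('s \<Rightarrow> (real^'s) \<times> (real^'d)) \<Rightarrow> 's \<Rightarrow> ((real^'s) \<times> (real^'d)) set" where
  "S_tilde K e i = {x\<in>K. x \<bullet> e i = 1 \<and> (\<forall>j. j \<noteq> i \<longrightarrow> x \<bullet> e j = 0)}"

text \<open>Torus-invariant divisors on X(Sigma) are represented by their coefficient
functions on the vertices rho of P = Conv(U Delta_i) (rays of Sigma; the vertices
of a reflexive polytope are primitive lattice points, the ray generators).
L(Delta_i) = sum over rho in Ver(Delta_i) - {0} of D_rho.\<close>
definition nef_divisor :: "(real^'d) set \<Rightarrow> (real^'d) set \<Rightarrow> real^'d \<Rightarrow> int" where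
  "nef_divisor P \<Delta>i = (\<lambda>\<rho>. if \<rho> \<in> vertices P \<and> \<rho> \<in> vertices \<Delta>i - {0} then 1 else 0)"

text \<open>Linear equivalence of torus-invariant divisors: the difference is the principal
divisor div(chi^n) = sum_rho <rho,n> D_rho of a character n in N.\<close>
definition lin_equiv :: "(real^'d) set \<Rightarrow> (real^'d \<Rightarrow> int) \<Rightarrow> (real^'d \<Rightarrow> int) \<Rightarrow> bool" where
  "lin_equiv P D D' \<longleftrightarrow> (\<exists>n. lattice_pt n \<and> (\<forall>\<rho>\<in>vertices P. real_of_int (D \<rho> - D' \<rho>) = \<rho> \<bullet> n))"

end

theory Submission
  imports Defs
begin


lemma lat_inner_int: "lattice_pt x \<Longrightarrow> lattice_pt y \<Longrightarrow> x \<bullet> y \<in> \<int>"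
  unfolding lattice_pt_def inner_vec_def by (auto intro!: Ints_sum Ints_mult)

lemma int_neg_le: "(r::real) \<in> \<int> \<Longrightarrow> r < 0 \<Longrightarrow> r \<le> -1"
proof -
  assume "r \<in> \<int>" "r < 0"
  then obtain n where n: "r = of_int n" using Ints_cases by blast
  hence "n < 0" using \<open>r < 0\<close> by simp
  hence "n \<le> -1" by simp
  thus ?thesis using n by simp
qed

lemma lp_compact: "lattice_polytope P \<Longrightarrow> compact P"
  unfolding lattice_polytope_def by (auto intro: finite_imp_compact_convex_hull)

lemma lp_convex: "lattice_polytope P \<Longrightarrow> convex P"
  unfolding lattice_polytope_def by auto

lemma lp_extreme_lattice: "lattice_polytope P \<Longrightarrow> v extreme_point_of P \<Longrightarrow> lattice_pt v"
  unfolding lattice_polytope_def using extreme_point_of_convex_hull by blast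

lemma halfspace_contra:
  fixes w :: "real^'d"
  assumes "0 \<in> interior P" "\<forall>x\<in>P. x \<bullet> w \<ge> 0" shows "w = 0"
proof (rule ccontr)
  assume w: "w \<noteq> 0"
  obtain e where e: "e > 0" "ball 0 e \<subseteq> P" using assms(1) mem_interior by blast
  define x where "x = (- (e / (2 * norm w))) *\<^sub>R w"
  have nw: "norm w > 0" using w by simp
  have "norm x = e / 2" using nw e by (simp add: x_def)
  hence xP: "x \<in> P" using e by auto
  have xw: "x \<bullet> w = - (e / (2 * norm w)) * (w \<bullet> w)" by (simp add: x_def)
  have ww: "w \<bullet> w > 0" using w by simp
  have c: "e / (2 * norm w) > 0" using e nw by simp
  have "0 < e / (2 * norm w) * (w \<bullet> w)" using c ww by (rule mult_pos_pos)
  hence "x \<bullet> w < 0" using xw by simp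
  thus False using assms(2) xP by force
qed

lemma zero_not_extreme:
  fixes P :: "(real^'d) set"
  assumes "0 \<in> interior P" shows "\<not> 0 extreme_point_of P"
proof
  assume ex: "0 extreme_point_of P"
  obtain e where e: "e > 0" "ball 0 e \<subseteq> P" using assms mem_interior by blast
  obtain k :: 'd where True by simp
  define v :: "real^'d" where "v = (e/2) *\<^sub>R axis k 1"
  have nv: "norm v = e/2" using e by (simp add: v_def norm_axis_1)
  hence "v \<in> P" "-v \<in> P" using e by auto
  moreover have "v \<noteq> 0" using nv e by auto
  have "v \<noteq> -v"
  proof
    assume h: "v = -v"
    have "2 *\<^sub>R v = v + v" by (rule scaleR_2)
    also have "\<dots> = v + -v" by (subst (2) h) (rule refl)
    also have "\<dots> = 0" by simp
    finally show False using \<open>v \<noteq> 0\<close> by simp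
  qed
  hence "0 \<in> open_segment v (-v)" using midpoint_in_open_segment[of v "-v"]
    by (simp add: midpoint_def)
  ultimately show False using ex unfolding extreme_point_of_def by blast
qed

lemma extreme_sub: "\<rho> extreme_point_of P \<Longrightarrow> \<rho> \<in> A \<Longrightarrow> A \<subseteq> P \<Longrightarrow> \<rho> extreme_point_of A"
  unfolding extreme_point_of_def by blast

lemma ms_mem: "(\<forall>i. x i \<in> D i) \<Longrightarrow> (\<Sum>i\<in>UNIV. x i) \<in> minkowski_sum D"
  unfolding minkowski_sum_def by blast

lemma ms_single:
  assumes "\<forall>i. (0::real^'d) \<in> D i" "y \<in> D k" shows "y \<in> minkowski_sum (D :: 's::finite \<Rightarrow> _)"
proof -
  have "(\<Sum>i\<in>UNIV. (if i = k then y else 0)) = y" by simp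
  moreover have "\<forall>i. (if i = k then y else 0) \<in> D i" using assms by auto
  ultimately show ?thesis using ms_mem[of "\<lambda>i. if i = k then y else 0" D] by simp
qed

lemma ms_pair:
  assumes "\<forall>i. (0::real^'d) \<in> D i" "y \<in> D k" "z \<in> D j" "j \<noteq> k"
  shows "y + z \<in> minkowski_sum (D :: 's::finite \<Rightarrow> _)"
proof -
  let ?x = "\<lambda>i. (if i = k then y else 0) + (if i = j then z else 0)"
  have "(\<Sum>i\<in>UNIV. ?x i) = y + z" by (simp add: sum.distrib)
  moreover have "\<forall>i. ?x i \<in> D i" using assms by auto
  ultimately show ?thesis using ms_mem[of ?x D] by simp
qed



lemma nef_zero: "nef_partition D \<Longrightarrow> \<forall>i. 0 \<in> D i"
  unfolding nef_partition_def by blast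

lemma nef_lp: "nef_partition D \<Longrightarrow> lattice_polytope (D i)"
  unfolding nef_partition_def by blast

lemma polar_le: "s \<in> polar_dual M \<Longrightarrow> x \<in> M \<Longrightarrow> x \<bullet> s \<ge> -1"
  unfolding polar_dual_def by blast

lemma dual_witness:
  fixes D :: "'s::finite \<Rightarrow> (real^'d) set"
  assumes "nef_partition D" "w \<noteq> 0"
  shows "\<exists>s. lattice_pt s \<and> s \<in> polar_dual (minkowski_sum D) \<and> w \<bullet> s < 0"
proof (rule ccontr)
  assume nex: "\<not> ?thesis"
  let ?M = "minkowski_sum D"
  have refl: "reflexive_polytope ?M" using assms(1) unfolding nef_partition_def by blast
  then obtain S where S: "finite S" "\<forall>x\<in>S. lattice_pt x" "polar_dual ?M = convex hull S"
    unfolding reflexive_polytope_def lattice_polytope_def by blast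
  have "bounded ?M" using refl unfolding reflexive_polytope_def
    using lp_compact compact_imp_bounded by blast
  then obtain B where B: "B > 0" "\<forall>x\<in>?M. norm x \<le> B" using bounded_pos by blast
  have nw: "norm w > 0" using assms(2) by simp
  define t where "t = 1 / (B * norm w)"
  have t: "t > 0" using B nw by (simp add: t_def)
  define y where "y = (- t) *\<^sub>R w"
  have ny: "norm y = 1 / B" using t nw by (simp add: y_def t_def)
  have yM: "y \<in> polar_dual ?M"
    unfolding polar_dual_def
  proof (safe)
    fix x assume x: "x \<in> ?M"
    have "\<bar>x \<bullet> y\<bar> \<le> norm x * norm y" by (rule Cauchy_Schwarz_ineq2)
    also have "\<dots> \<le> B * (1 / B)" using B x ny by (simp add: mult_right_mono)
    also have "\<dots> = 1" using B by simp
    finally show "x \<bullet> y \<ge> -1" by linarith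
  qed
  have "\<forall>s\<in>S. w \<bullet> s \<ge> 0" using nex S yM
    by (metis hull_inc not_le)
  hence "convex hull S \<subseteq> {v. w \<bullet> v \<ge> 0}"
    by (intro hull_minimal) (auto simp: convex_halfspace_ge)
  hence "w \<bullet> y \<ge> 0" using yM S(3) by auto
  moreover have "w \<bullet> y = - t * (w \<bullet> w)" by (simp add: y_def)
  moreover have "w \<bullet> w > 0" using assms(2) by simp
  moreover have "t * (w \<bullet> w) > 0" using t \<open>w \<bullet> w > 0\<close> by (rule mult_pos_pos)
  ultimately show False by linarith
qed

lemma dual_witness_int:
  fixes D :: "'s::finite \<Rightarrow> (real^'d) set"
  assumes "nef_partition D" "w \<noteq> 0" "lattice_pt w"
  shows "\<exists>s. s \<in> polar_dual (minkowski_sum D) \<and> w \<bullet> s \<le> -1"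
proof -
  obtain s where s: "lattice_pt s" "s \<in> polar_dual (minkowski_sum D)" "w \<bullet> s < 0"
    using dual_witness[OF assms(1,2)] by blast
  have "w \<bullet> s \<in> \<int>" using s(1) assms(3) by (rule lat_inner_int[rotated])
  thus ?thesis using s int_neg_le by blast
qed

lemma part_sub: "D k \<subseteq> hull_union D"
  unfolding hull_union_def by (meson UN_I UNIV_I hull_subset subset_iff)

lemma vert_in_part: "\<rho> \<in> vertices (hull_union D) \<Longrightarrow> \<exists>k. \<rho> \<in> D k"
  unfolding vertices_def hull_union_def using extreme_point_of_convex_hull by fastforce

lemma vert_ne0:
  fixes P :: "(real^'d) set"
  shows "0 \<in> interior P \<Longrightarrow> \<rho> \<in> vertices P \<Longrightarrow> \<rho> \<noteq> 0"
  unfolding vertices_def using zero_not_extreme by blast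

lemma vert_extreme_part:
  "\<rho> \<in> vertices (hull_union D) \<Longrightarrow> \<rho> \<in> D k \<Longrightarrow> \<rho> extreme_point_of D k"
  unfolding vertices_def using extreme_sub part_sub by blast

lemma vert_lattice:
  assumes "nef_partition D" "\<rho> \<in> vertices (hull_union D)" shows "lattice_pt \<rho>"
proof -
  obtain k where "\<rho> \<in> D k" using vert_in_part assms(2) by blast
  hence "\<rho> extreme_point_of D k" using vert_extreme_part assms(2) by blast
  thus ?thesis using lp_extreme_lattice nef_lp assms(1) by blast
qed

lemma vert_unique:
  fixes D :: "'s::finite \<Rightarrow> (real^'d) set"
  assumes "nef_partition D" "0 \<in> interior (hull_union D)" "\<rho> \<in> vertices (hull_union D)"
    "\<rho> \<in> D k" "\<rho> \<in> D j"
  shows "j = k"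
proof (rule ccontr)
  assume jk: "j \<noteq> k"
  have "\<rho> \<noteq> 0" using vert_ne0 assms(2,3) by blast
  then obtain s where s: "s \<in> polar_dual (minkowski_sum D)" "\<rho> \<bullet> s \<le> -1"
    using dual_witness_int[OF assms(1)] vert_lattice[OF assms(1,3)] by blast
  have "\<rho> + \<rho> \<in> minkowski_sum D" using ms_pair[OF nef_zero[OF assms(1)] assms(4,5) jk] .
  hence "(\<rho> + \<rho>) \<bullet> s \<ge> -1" using polar_le s(1) by blast
  moreover have "(\<rho> + \<rho>) \<bullet> s = \<rho> \<bullet> s + \<rho> \<bullet> s" by (rule inner_add_left)
  ultimately show False using s(2) by linarith
qed

lemma lemmaB:
  fixes D :: "'s::finite \<Rightarrow> (real^'d) set"
  assumes nef: "nef_partition D" and w: "w extreme_point_of D k" "w \<noteq> 0"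
  shows "w \<in> vertices (hull_union D)"
proof -
  let ?P = "hull_union D"
  have z: "\<forall>i. 0 \<in> D i" using nef_zero[OF nef] .
  have wl: "lattice_pt w" using lp_extreme_lattice nef_lp[OF nef] w(1) by blast
  have wD: "w \<in> D k" using w(1) extreme_point_of_def by blast
  obtain s where s: "s \<in> polar_dual (minkowski_sum D)" "w \<bullet> s \<le> -1"
    using dual_witness_int[OF nef w(2) wl] by blast
  have "w \<bullet> s \<ge> -1" using polar_le[OF s(1) ms_single[OF z wD]] .
  hence ws: "w \<bullet> s = -1" using s(2) by simp
  have other: "y \<bullet> s \<ge> 0" if "y \<in> D j" "j \<noteq> k" for y j
  proof -
    have "(w + y) \<bullet> s \<ge> -1" using polar_le[OF s(1) ms_pair[OF z wD that]] .
    thus ?thesis using ws by (simp add: inner_add_left)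
  qed
  have own: "y \<bullet> s \<ge> -1" if "y \<in> D k" for y
    using polar_le[OF s(1) ms_single[OF z that]] .
  define C where "C = {x. x \<bullet> s \<ge> -1 \<and> (x \<bullet> s = -1 \<longrightarrow> x \<in> D k)}"
  have cvxD: "convex (D k)" using lp_convex nef_lp[OF nef] by blast
  have "convex C"
    unfolding convex_def
  proof (intro allI impI ballI)
    fix x y and u v :: real
    assume x: "x \<in> C" and y: "y \<in> C" and uv: "0 \<le> u" "0 \<le> v" "u + v = 1"
    have xs: "x \<bullet> s \<ge> -1" and ys: "y \<bullet> s \<ge> -1" using x y by (auto simp: C_def)
    have e: "(u *\<^sub>R x + v *\<^sub>R y) \<bullet> s = u * (x \<bullet> s) + v * (y \<bullet> s)"
      by (simp add: inner_add_left)
    have ge: "u * (x \<bullet> s) + v * (y \<bullet> s) \<ge> -1"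
    proof -
      have "u * (x \<bullet> s) \<ge> u * (-1)" using mult_left_mono[OF xs uv(1)] by simp
      moreover have "v * (y \<bullet> s) \<ge> v * (-1)" using mult_left_mono[OF ys uv(2)] by simp
      ultimately show ?thesis using uv by linarith
    qed
    show "u *\<^sub>R x + v *\<^sub>R y \<in> C"
      unfolding C_def mem_Collect_eq
    proof (intro conjI impI)
      show "-1 \<le> (u *\<^sub>R x + v *\<^sub>R y) \<bullet> s" using e ge by simp
      assume eq: "(u *\<^sub>R x + v *\<^sub>R y) \<bullet> s = -1"
      show "u *\<^sub>R x + v *\<^sub>R y \<in> D k"
      proof (cases "u = 0")
        case True thus ?thesis using uv y eq by (auto simp: C_def)
      next
        case u0: False
        show ?thesis
        proof (cases "v = 0")
          case True thus ?thesis using uv x eq by (auto simp: C_def)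
        next
          case v0: False
          have up: "u > 0" "v > 0" using u0 v0 uv by auto
          have "x \<bullet> s = -1"
          proof (rule ccontr)
            assume "x \<bullet> s \<noteq> -1"
            hence "x \<bullet> s > -1" using xs by simp
            hence "u * (x \<bullet> s) > u * (-1)" using up(1) by (rule mult_strict_left_mono)
            moreover have "v * (y \<bullet> s) \<ge> v * (-1)" using mult_left_mono[OF ys uv(2)] by simp
            ultimately show False using e eq uv by linarith
          qed
          moreover have "y \<bullet> s = -1"
          proof (rule ccontr)
            assume "y \<bullet> s \<noteq> -1"
            hence "y \<bullet> s > -1" using ys by simp
            hence "v * (y \<bullet> s) > v * (-1)" using up(2) by (rule mult_strict_left_mono)
            moreover have "u * (x \<bullet> s) \<ge> u * (-1)" using mult_left_mono[OF xs uv(1)] by simp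
            ultimately show False using e eq uv by linarith
          qed
          ultimately have "x \<in> D k" "y \<in> D k" using x y by (auto simp: C_def)
          thus ?thesis using cvxD uv unfolding convex_def by blast
        qed
      qed
    qed
  qed
  moreover have "(\<Union>i. D i) \<subseteq> C"
  proof
    fix x assume "x \<in> (\<Union>i. D i)"
    then obtain j where xj: "x \<in> D j" by blast
    show "x \<in> C"
    proof (cases "j = k")
      case True thus ?thesis using own xj by (auto simp: C_def)
    next
      case False thus ?thesis using other[OF xj False] by (auto simp: C_def)
    qed
  qed
  ultimately have PC: "?P \<subseteq> C" unfolding hull_union_def by (rule hull_minimal[rotated])
  define F where "F = ?P \<inter> {x. s \<bullet> x = -1}"
  have cvxP: "convex ?P" unfolding hull_union_def by simp
  have "\<And>x. x \<in> ?P \<Longrightarrow> s \<bullet> x \<ge> -1" using PC by (auto simp: C_def inner_commute)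
  hence Fface: "F face_of ?P" unfolding F_def by (rule face_of_Int_supporting_hyperplane_ge[OF cvxP])
  have FD: "F \<subseteq> D k" using PC by (auto simp: F_def C_def inner_commute)
  have wF: "w \<in> F" using wD part_sub ws by (auto simp: F_def inner_commute)
  have "w extreme_point_of F" using extreme_sub[OF w(1) wF FD] .
  hence "w extreme_point_of ?P" using extreme_point_of_face[OF Fface] by blast
  thus ?thesis unfolding vertices_def by simp
qed

lemma lemmaC:
  fixes D :: "'s::finite \<Rightarrow> (real^'d) set"
  assumes nef: "nef_partition D" and G: "convex G" "0 \<in> G"
    and V: "\<forall>\<rho>\<in>vertices (hull_union D). \<rho> \<in> D k \<longrightarrow> \<rho> \<in> G"
  shows "D k \<subseteq> G"
proof -
  have lp: "lattice_polytope (D k)" using nef_lp[OF nef] .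
  have "D k = convex hull {x. x extreme_point_of D k}"
    using Krein_Milman_Minkowski lp_compact[OF lp] lp_convex[OF lp] by blast
  also have "\<dots> \<subseteq> G"
  proof (rule hull_minimal)
    show "convex G" using G(1) .
    show "{x. x extreme_point_of D k} \<subseteq> G"
    proof
      fix x assume x: "x \<in> {x. x extreme_point_of D k}"
      show "x \<in> G"
      proof (cases "x = 0")
        case True thus ?thesis using G by simp
      next
        case False
        hence "x \<in> vertices (hull_union D)" using lemmaB[OF nef] x by blast
        moreover have "x \<in> D k" using x extreme_point_of_def by blast
        ultimately show ?thesis using V by blast
      qed
    qed
  qed
  finally show ?thesis .
qed

lemma nd_val:
  fixes P :: "(real^'d) set"
  assumes "\<rho> \<in> vertices P" "0 \<in> interior P" "A \<subseteq> P"
  shows "nef_divisor P A \<rho> = (if \<rho> \<in> A then 1 else 0)"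
proof -
  have "\<rho> \<noteq> 0" using vert_ne0 assms(1,2) by blast
  moreover have "\<rho> \<in> vertices A \<longleftrightarrow> \<rho> \<in> A"
    using assms(1,3) extreme_sub unfolding vertices_def extreme_point_of_def by blast
  ultimately show ?thesis using assms(1) unfolding nef_divisor_def by auto
qed

lemma zero_on_verts:
  fixes P :: "(real^'d) set"
  assumes "reflexive_polytope P" "\<forall>\<rho>\<in>vertices P. \<rho> \<bullet> m = 0"
  shows "m = 0"
proof -
  have lp: "lattice_polytope P" "0 \<in> interior P" using assms(1) reflexive_polytope_def by auto
  have "P = convex hull (vertices P)"
    unfolding vertices_def using Krein_Milman_Minkowski lp_compact[OF lp(1)] lp_convex[OF lp(1)] by blast
  also have "\<dots> \<subseteq> {x. m \<bullet> x \<ge> 0}"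
    using assms(2) convex_halfspace_ge[of 0 m] by (intro hull_minimal) (auto simp: inner_commute)
  finally have "\<forall>x\<in>P. x \<bullet> m \<ge> 0" by (auto simp: inner_commute)
  thus ?thesis using halfspace_contra lp(2) by blast
qed



lemma axis_comp: "axis j (1::real) $ i = (if i = j then 1 else 0)"
  unfolding axis_def by simp

lemma cone_axis:
  assumes "\<forall>i. (0::real^'d) \<in> D i" "x \<in> D j"
  shows "(axis j 1, x) \<in> nef_cone (D :: 's::finite \<Rightarrow> _)"
proof -
  let ?E = "\<lambda>i. (\<lambda>v. axis j (1::real) $ i *\<^sub>R v) ` D i"
  have "\<forall>i. (0::real^'d) \<in> ?E i" using assms(1) by (metis image_eqI scaleR_zero_right)
  moreover have "x \<in> ?E j" using assms(2) by (metis axis_nth image_eqI scaleR_one)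
  ultimately have "x \<in> minkowski_sum ?E" by (rule ms_single)
  moreover have "\<forall>i. axis j (1::real) $ i \<ge> 0" by (simp add: axis_comp)
  ultimately show ?thesis unfolding nef_cone_def by simp
qed

lemma cone_elim:
  assumes "(a, x) \<in> nef_cone D"
  shows "(\<forall>i. a $ i \<ge> 0) \<and> (\<exists>y. (\<forall>k. y k \<in> D k) \<and> x = (\<Sum>k\<in>UNIV. a $ k *\<^sub>R y k))"
proof -
  have a: "\<forall>i. a $ i \<ge> 0" and x: "x \<in> minkowski_sum (\<lambda>i. (\<lambda>v. a $ i *\<^sub>R v) ` D i)"
    using assms unfolding nef_cone_def by auto
  obtain z where z: "\<forall>i. z i \<in> (\<lambda>v. a $ i *\<^sub>R v) ` D i" "x = (\<Sum>i\<in>UNIV. z i)"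
    using x unfolding minkowski_sum_def by blast
  have "\<forall>i. \<exists>y. y \<in> D i \<and> z i = a $ i *\<^sub>R y" using z(1) by blast
  then obtain y where y: "\<forall>i. y i \<in> D i \<and> z i = a $ i *\<^sub>R y i" by metis
  show ?thesis using a y z(2) by auto
qed

lemma cone_intro:
  assumes "\<forall>i. a $ i \<ge> 0" "\<forall>k. y k \<in> D k"
  shows "(a, (\<Sum>k\<in>UNIV. a $ k *\<^sub>R y k)) \<in> nef_cone D"
proof -
  have "\<forall>i. a $ i *\<^sub>R y i \<in> (\<lambda>v. a $ i *\<^sub>R v) ` D i" using assms(2) by blast
  hence "(\<Sum>k\<in>UNIV. a $ k *\<^sub>R y k) \<in> minkowski_sum (\<lambda>i. (\<lambda>v. a $ i *\<^sub>R v) ` D i)"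
    by (rule ms_mem)
  thus ?thesis using assms(1) unfolding nef_cone_def by simp
qed

lemma lem_comb:
  fixes C :: "'a::real_vector set"
  assumes "convex C" "0 \<in> C" "\<alpha> \<ge> 0" "\<beta> \<ge> 0" "y \<in> C" "y' \<in> C"
  shows "\<exists>z\<in>C. \<alpha> *\<^sub>R y + \<beta> *\<^sub>R y' = (\<alpha> + \<beta>) *\<^sub>R z"
proof (cases "\<alpha> + \<beta> = 0")
  case True
  hence "\<alpha> = 0" "\<beta> = 0" using assms by auto
  thus ?thesis using assms(2) by auto
next
  case False
  hence pos: "\<alpha> + \<beta> > 0" using assms by auto
  define z where "z = (\<alpha> / (\<alpha> + \<beta>)) *\<^sub>R y + (\<beta> / (\<alpha> + \<beta>)) *\<^sub>R y'"
  have "\<alpha> / (\<alpha> + \<beta>) + \<beta> / (\<alpha> + \<beta>) = 1" using pos by (simp add: add_divide_distrib[symmetric])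
  hence "z \<in> C" unfolding z_def using assms pos
    by (intro convexD[OF assms(1)]) auto
  moreover have "(\<alpha> + \<beta>) *\<^sub>R z = \<alpha> *\<^sub>R y + \<beta> *\<^sub>R y'"
    using pos by (simp add: z_def scaleR_add_right)
  ultimately show ?thesis by metis
qed

lemma cone_convex:
  assumes "\<forall>i. convex (D i) \<and> (0::real^'d) \<in> D i"
  shows "convex (nef_cone (D :: 's::finite \<Rightarrow> _))"
  unfolding convex_def
proof (intro ballI allI impI)
  fix p q and u v :: real
  assume p: "p \<in> nef_cone D" and q: "q \<in> nef_cone D" and uv: "0 \<le> u" "0 \<le> v" "u + v = 1"
  obtain a x where ax: "p = (a, x)" by (cases p)
  obtain b x' where bx: "q = (b, x')" by (cases q)
  obtain y where y: "\<forall>k. y k \<in> D k" "x = (\<Sum>k\<in>UNIV. a $ k *\<^sub>R y k)" and a: "\<forall>i. a $ i \<ge> 0"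
    using cone_elim[of a x D] p ax by blast
  obtain y' where y': "\<forall>k. y' k \<in> D k" "x' = (\<Sum>k\<in>UNIV. b $ k *\<^sub>R y' k)" and b: "\<forall>i. b $ i \<ge> 0"
    using cone_elim[of b x' D] q bx by blast
  have "\<forall>k. \<exists>z\<in>D k. (u * a $ k) *\<^sub>R y k + (v * b $ k) *\<^sub>R y' k = (u * a $ k + v * b $ k) *\<^sub>R z"
    using assms a b uv y(1) y'(1) by (intro allI lem_comb) auto
  then obtain z where z: "\<forall>k. z k \<in> D k \<and> (u * a $ k) *\<^sub>R y k + (v * b $ k) *\<^sub>R y' k = (u * a $ k + v * b $ k) *\<^sub>R z k"
    by metis
  let ?c = "u *\<^sub>R a + v *\<^sub>R b"
  have c: "\<forall>i. ?c $ i \<ge> 0" using a b uv by simp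
  have "u *\<^sub>R x + v *\<^sub>R x' = (\<Sum>k\<in>UNIV. (u * a $ k) *\<^sub>R y k + (v * b $ k) *\<^sub>R y' k)"
    by (simp add: y(2) y'(2) scaleR_sum_right sum.distrib)
  also have "\<dots> = (\<Sum>k\<in>UNIV. ?c $ k *\<^sub>R z k)" using z by simp
  finally have "u *\<^sub>R x + v *\<^sub>R x' = (\<Sum>k\<in>UNIV. ?c $ k *\<^sub>R z k)" .
  hence "(?c, u *\<^sub>R x + v *\<^sub>R x') \<in> nef_cone D" using cone_intro[OF c, of z D] z by simp
  thus "u *\<^sub>R p + v *\<^sub>R q \<in> nef_cone D" using ax bx by simp
qed

lemma unique1:
  fixes f :: "'s::finite \<Rightarrow> real"
  assumes "\<forall>i. f i \<in> \<int>" "\<forall>i. f i \<ge> 0" "(\<Sum>i\<in>UNIV. f i) = 1"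
  shows "\<exists>i. f i = 1 \<and> (\<forall>j. j \<noteq> i \<longrightarrow> f j = 0)"
proof -
  obtain i where i: "f i \<noteq> 0" using assms(3) by (metis sum.neutral zero_neq_one)
  have "f i \<ge> 1"
  proof -
    obtain n where n: "f i = of_int n" using assms(1) Ints_cases by blast
    hence "n > 0" using i assms(2) by (metis of_int_0 of_int_le_iff order_le_less)
    thus ?thesis using n by simp
  qed
  moreover have "(\<Sum>i\<in>UNIV. f i) = f i + (\<Sum>j\<in>UNIV - {i}. f j)"
    by (simp add: sum.remove)
  moreover have "(\<Sum>j\<in>UNIV - {i}. f j) \<ge> 0" using assms(2) by (simp add: sum_nonneg)
  ultimately have fi: "f i = 1" and rest: "(\<Sum>j\<in>UNIV - {i}. f j) = 0" using assms(3) by linarith+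
  have "\<forall>j\<in>UNIV - {i}. f j = 0" using rest assms(2) by (subst (asm) sum_nonneg_eq_0_iff) auto
  thus ?thesis using fi by blast
qed

lemma extreme_min_face:
  fixes C :: "(real^'d) set"
  assumes "v extreme_point_of {y\<in>C. \<forall>i\<in>I. y \<bullet> w i = b i}"
    and "\<forall>y\<in>C. \<forall>i\<in>I. y \<bullet> w i \<ge> b i"
  shows "v extreme_point_of C"
proof -
  let ?F = "{y\<in>C. \<forall>i\<in>I. y \<bullet> w i = b i}"
  have vF: "v \<in> ?F" using assms(1) unfolding extreme_point_of_def by (rule conjunct1)
  have h: "\<forall>a\<in>?F. \<forall>b\<in>?F. v \<notin> open_segment a b"
    using assms(1) unfolding extreme_point_of_def by (rule conjunct2)
  show ?thesis unfolding extreme_point_of_def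
  proof (intro conjI ballI)
    show "v \<in> C" using vF by blast
    fix p q assume p: "p \<in> C" and q: "q \<in> C"
    show "v \<notin> open_segment p q"
    proof
      assume vs: "v \<in> open_segment p q"
      then obtain u where u: "0 < u" "u < 1" "v = (1 - u) *\<^sub>R p + u *\<^sub>R q"
        by (auto simp: in_segment)
      have pq: "p \<in> ?F \<and> q \<in> ?F"
      proof (intro conjI CollectI ballI)
        show "p \<in> C" "q \<in> C" using p q by auto
      next
        fix i assume i: "i \<in> I"
        have e: "(1 - u) * (p \<bullet> w i) + u * (q \<bullet> w i) = b i"
          using vF i u(3) by (simp add: inner_add_left)
        have pb: "p \<bullet> w i \<ge> b i" and qb: "q \<bullet> w i \<ge> b i" using assms(2) p q i by auto
        have m1: "(1 - u) * (p \<bullet> w i) \<ge> (1 - u) * b i" using pb u by (simp add: mult_left_mono)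
        have m2: "u * (q \<bullet> w i) \<ge> u * b i" using qb u by (simp add: mult_left_mono)
        show "p \<bullet> w i = b i"
        proof (rule ccontr)
          assume "p \<bullet> w i \<noteq> b i"
          hence "p \<bullet> w i > b i" using pb by simp
          hence "(1 - u) * (p \<bullet> w i) > (1 - u) * b i" using u by simp
          thus False using e m2 by (simp add: algebra_simps)
        qed
        show "q \<bullet> w i = b i"
        proof (rule ccontr)
          assume "q \<bullet> w i \<noteq> b i"
          hence "q \<bullet> w i > b i" using qb by simp
          hence "u * (q \<bullet> w i) > u * b i" using u by simp
          thus False using e m1 by (simp add: algebra_simps)
        qed
      qed
      thus False using h vs by blast
    qed
  qed
qed

lemma sum_bij_reindex:
  fixes f :: "'s::finite \<Rightarrow> 'b::comm_monoid_add"
  assumes "bij \<tau>"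
  shows "(\<Sum>j\<in>UNIV. f (\<tau> j)) = (\<Sum>i\<in>UNIV. f i)"
  using sum.reindex_bij_betw[of \<tau> UNIV UNIV f] assms by simp



lemma pair_axis: "(axis j (1::real), x) \<bullet> e = fst e $ j + x \<bullet> snd e"
  by (simp add: inner_prod_def inner_axis')

lemma fwd:
  fixes \<Delta> \<Delta>t :: "'s::finite \<Rightarrow> (real^'d) set"
  assumes nefD: "nef_partition \<Delta>"
    and refl: "reflexive_polytope (hull_union \<Delta>)"
    and nefT: "nef_partition \<Delta>t"
    and eq: "hull_union \<Delta>t = hull_union \<Delta>"
    and E1: "\<forall>i. e i \<noteq> 0 \<and> e i \<in> dual_cone (nef_cone \<Delta>) \<and> lattice_pt2 (e i)"
    and E2: "(\<Sum>i\<in>UNIV. e i) = deg_dual"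
    and E3: "\<forall>i. \<Delta>t i = snd ` S_tilde (nef_cone \<Delta>) e i"
  shows "\<exists>\<sigma> :: 's \<Rightarrow> 's. bij \<sigma> \<and>
            (\<forall>i. lin_equiv (hull_union \<Delta>)
                   (nef_divisor (hull_union \<Delta>) (\<Delta>t (\<sigma> i)))
                   (nef_divisor (hull_union \<Delta>) (\<Delta> i)))"
proof -
  let ?P = "hull_union \<Delta>"
  let ?K = "nef_cone \<Delta>"
  define a where "a i = fst (e i)" for i
  define n where "n i = snd (e i)" for i
  have int0: "0 \<in> interior ?P" using refl reflexive_polytope_def by blast
  have int0T: "0 \<in> interior (hull_union \<Delta>t)" using int0 eq by simp
  have z: "\<forall>i. 0 \<in> \<Delta> i" using nef_zero[OF nefD] .
  have inK: "(axis j 1, x) \<in> ?K" if "x \<in> \<Delta> j" for j x using cone_axis[OF z that] .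
  have pairK: "(axis j 1, x) \<bullet> e i \<ge> 0" if "x \<in> \<Delta> j" for i j x
    using E1 inK[OF that] unfolding dual_cone_def by blast
  have pair: "a i $ j + x \<bullet> n i \<ge> 0" if "x \<in> \<Delta> j" for i j x
    using pairK[OF that, of i] by (simp add: pair_axis a_def n_def)
  have aint: "a i $ j \<in> \<int>" for i j using E1 unfolding lattice_pt2_def a_def by blast
  have nlat: "lattice_pt (n i)" for i using E1 unfolding lattice_pt2_def n_def by blast
  have anon: "a i $ j \<ge> 0" for i j using pair[OF spec[OF z, of j], of i] by simp
  have "fst (\<Sum>i\<in>UNIV. e i) = (\<Sum>i\<in>UNIV. a i)" by (simp add: fst_sum a_def)
  hence asumv: "(\<Sum>i\<in>UNIV. a i) = (\<chi> i. 1)" using E2 by (simp add: deg_dual_def)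
  have asum: "(\<Sum>i\<in>UNIV. a i $ j) = 1" for j
    using arg_cong[OF asumv, of "\<lambda>v. v $ j"] by simp
  have "snd (\<Sum>i\<in>UNIV. e i) = (\<Sum>i\<in>UNIV. n i)" by (simp add: snd_sum n_def)
  hence nsum: "(\<Sum>i\<in>UNIV. n i) = 0" using E2 by (simp add: deg_dual_def)
  have "\<forall>j. \<exists>i. a i $ j = 1 \<and> (\<forall>i'. i' \<noteq> i \<longrightarrow> a i' $ j = 0)"
    using unique1[of "\<lambda>i. a i $ _"] aint anon asum by blast
  then obtain \<tau> where \<tau>: "\<forall>j. a (\<tau> j) $ j = 1 \<and> (\<forall>i'. i' \<noteq> \<tau> j \<longrightarrow> a i' $ j = 0)" by metis
  have aval: "a i $ j = (if i = \<tau> j then 1 else 0)" for i j using \<tau> by auto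
  have surj: "surj \<tau>"
  proof (rule surjI[of _ "\<lambda>i. SOME j. \<tau> j = i"], rule ccontr)
    fix i assume nh: "\<tau> (SOME j. \<tau> j = i) \<noteq> i"
    hence nj: "\<forall>j. \<tau> j \<noteq> i" by (metis (mono_tags) someI)
    hence "a i = 0" using aval by (auto simp: vec_eq_iff)
    hence "n i \<noteq> 0" using E1 unfolding a_def n_def by (metis prod.collapse zero_prod_def)
    moreover have "\<forall>x\<in>?P. x \<bullet> n i \<ge> 0"
    proof -
      have "(\<Union>j. \<Delta> j) \<subseteq> {x. n i \<bullet> x \<ge> 0}"
      proof
        fix x assume "x \<in> (\<Union>j. \<Delta> j)"
        then obtain j where "x \<in> \<Delta> j" by blast
        hence "0 \<le> a i $ j + x \<bullet> n i" by (rule pair)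
        thus "x \<in> {x. n i \<bullet> x \<ge> 0}" using \<open>a i = 0\<close> by (simp add: inner_commute)
      qed
      hence "?P \<subseteq> {x. n i \<bullet> x \<ge> 0}" unfolding hull_union_def
        by (intro hull_minimal) (auto simp: convex_halfspace_ge)
      thus ?thesis by (auto simp: inner_commute)
    qed
    ultimately show False using halfspace_contra int0 by blast
  qed
  have inj: "inj \<tau>" using finite_UNIV_surj_inj[OF _ surj] by simp
  have bij: "bij \<tau>" using inj surj by (simp add: bij_def)
  have main: "lin_equiv ?P (nef_divisor ?P (\<Delta>t (\<tau> i))) (nef_divisor ?P (\<Delta> i))" for i
    unfolding lin_equiv_def
  proof (intro exI[of _ "n (\<tau> i)"] conjI ballI)
    show "lattice_pt (n (\<tau> i))" by (rule nlat)
    fix \<rho> assume \<rho>: "\<rho> \<in> vertices ?P"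
    have \<rho>T: "\<rho> \<in> vertices (hull_union \<Delta>t)" using \<rho> eq by simp
    obtain k where k: "\<rho> \<in> \<Delta> k" using vert_in_part \<rho> by blast
    obtain l where l: "\<rho> \<in> \<Delta>t l" using vert_in_part \<rho>T by blast
    have \<rho>lat: "lattice_pt \<rho>" using vert_lattice[OF nefD \<rho>] .
    define c where "c m = a m $ k + \<rho> \<bullet> n m" for m
    have cint: "\<forall>m. c m \<in> \<int>" unfolding c_def using aint lat_inner_int[OF \<rho>lat nlat] by auto
    have cnn: "\<forall>m. c m \<ge> 0" unfolding c_def using pair[OF k] by auto
    have "(\<Sum>m\<in>UNIV. c m) = (\<Sum>m\<in>UNIV. a m $ k) + \<rho> \<bullet> (\<Sum>m\<in>UNIV. n m)"
      unfolding c_def by (simp add: sum.distrib inner_sum_right)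
    hence csum: "(\<Sum>m\<in>UNIV. c m) = 1" using asum nsum by simp
    obtain m0 where m0: "c m0 = 1" "\<forall>m. m \<noteq> m0 \<longrightarrow> c m = 0" using unique1[OF cint cnn csum] by blast
    have "(axis k 1, \<rho>) \<in> S_tilde ?K e m0"
      unfolding S_tilde_def using inK[OF k] m0 by (auto simp: pair_axis c_def a_def n_def)
    hence "\<rho> \<in> \<Delta>t m0" using E3 by force
    hence m0l: "m0 = l" using vert_unique[OF nefT int0T \<rho>T l] by blast
    have cval: "c m = (if m = l then 1 else 0)" for m using m0 m0l by auto
    have inT: "\<rho> \<in> \<Delta>t (\<tau> i) \<longleftrightarrow> \<tau> i = l" using vert_unique[OF nefT int0T \<rho>T l] l by blast
    have inD: "\<rho> \<in> \<Delta> i \<longleftrightarrow> i = k" using vert_unique[OF nefD int0 \<rho> k] k by blast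
    have subT: "\<Delta>t (\<tau> i) \<subseteq> ?P" using part_sub[of \<Delta>t] eq by simp
    have d1: "nef_divisor ?P (\<Delta>t (\<tau> i)) \<rho> = (if \<tau> i = l then 1 else 0)"
      using nd_val[OF \<rho> int0 subT] inT by simp
    have d2: "nef_divisor ?P (\<Delta> i) \<rho> = (if i = k then 1 else 0)"
      using nd_val[OF \<rho> int0 part_sub] inD by simp
    have "\<rho> \<bullet> n (\<tau> i) = c (\<tau> i) - a (\<tau> i) $ k" unfolding c_def by simp
    also have "\<dots> = (if \<tau> i = l then 1 else 0) - (if i = k then 1 else 0)"
      using cval aval inj by (simp add: inj_eq)
    finally show "real_of_int (nef_divisor ?P (\<Delta>t (\<tau> i)) \<rho> - nef_divisor ?P (\<Delta> i) \<rho>) = \<rho> \<bullet> n (\<tau> i)"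
      using d1 d2 by simp
  qed
  show ?thesis using bij main by blast
qed



lemma bwd:
  fixes \<Delta> \<Delta>t :: "'s::finite \<Rightarrow> (real^'d) set"
  assumes nefD: "nef_partition \<Delta>"
    and refl: "reflexive_polytope (hull_union \<Delta>)"
    and nefT: "nef_partition \<Delta>t"
    and eq: "hull_union \<Delta>t = hull_union \<Delta>"
    and bij: "bij \<sigma>"
    and LE: "\<forall>i. lin_equiv (hull_union \<Delta>)
                   (nef_divisor (hull_union \<Delta>) (\<Delta>t (\<sigma> i)))
                   (nef_divisor (hull_union \<Delta>) (\<Delta> i))"
  shows "\<exists>e :: 's \<Rightarrow> (real^'s) \<times> (real^'d).
            (\<forall>i. e i \<noteq> 0 \<and> e i \<in> dual_cone (nef_cone \<Delta>) \<and> lattice_pt2 (e i))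
            \<and> (\<Sum>i\<in>UNIV. e i) = deg_dual
            \<and> (\<forall>i. \<Delta>t i = snd ` S_tilde (nef_cone \<Delta>) e i)"
proof -
  let ?P = "hull_union \<Delta>"
  let ?K = "nef_cone \<Delta>"
  let ?V = "vertices ?P"
  have int0: "0 \<in> interior ?P" using refl reflexive_polytope_def by blast
  have int0T: "0 \<in> interior (hull_union \<Delta>t)" using int0 eq by simp
  have z: "\<forall>i. 0 \<in> \<Delta> i" using nef_zero[OF nefD] .
  have zT: "\<forall>i. 0 \<in> \<Delta>t i" using nef_zero[OF nefT] .
  have VT: "vertices (hull_union \<Delta>t) = ?V" using eq by simp
  have "\<forall>i. \<exists>m. lattice_pt m \<and> (\<forall>\<rho>\<in>?V. real_of_int (nef_divisor ?P (\<Delta>t (\<sigma> i)) \<rho> - nef_divisor ?P (\<Delta> i) \<rho>) = \<rho> \<bullet> m)"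
    using LE unfolding lin_equiv_def by blast
  then obtain n where n: "\<forall>i. lattice_pt (n i) \<and> (\<forall>\<rho>\<in>?V. real_of_int (nef_divisor ?P (\<Delta>t (\<sigma> i)) \<rho> - nef_divisor ?P (\<Delta> i) \<rho>) = \<rho> \<bullet> n i)"
    by metis
  have uniqD: "\<rho> \<in> \<Delta> i \<longleftrightarrow> i = k" if "\<rho> \<in> ?V" "\<rho> \<in> \<Delta> k" for \<rho> i k
    using vert_unique[OF nefD int0 that(1) that(2)] that(2) by blast
  have uniqT: "\<rho> \<in> \<Delta>t i \<longleftrightarrow> i = l" if "\<rho> \<in> ?V" "\<rho> \<in> \<Delta>t l" for \<rho> i l
    using vert_unique[OF nefT int0T _ that(2)] that VT by blast
  have nrho: "\<rho> \<bullet> n i = (if \<rho> \<in> \<Delta>t (\<sigma> i) then 1 else 0) - (if \<rho> \<in> \<Delta> i then 1 else 0)"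
    if \<rho>: "\<rho> \<in> ?V" for \<rho> i
  proof -
    have subT: "\<Delta>t (\<sigma> i) \<subseteq> ?P" using part_sub[of \<Delta>t] eq by simp
    have "real_of_int (nef_divisor ?P (\<Delta>t (\<sigma> i)) \<rho> - nef_divisor ?P (\<Delta> i) \<rho>) = \<rho> \<bullet> n i"
      using n \<rho> by blast
    thus ?thesis using nd_val[OF \<rho> int0 subT] nd_val[OF \<rho> int0 part_sub[of \<Delta> i]]
      by (simp split: if_splits)
  qed
  define \<tau> where "\<tau> = inv \<sigma>"
  have st: "\<sigma> (\<tau> j) = j" for j using bij unfolding \<tau>_def by (simp add: bij_is_surj surj_f_inv_f)
  have ts: "\<tau> (\<sigma> i) = i" for i using bij unfolding \<tau>_def by (simp add: bij_is_inj inv_f_f)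
  have bijt: "bij \<tau>" using bij unfolding \<tau>_def by (simp add: bij_imp_bij_inv)
  have sinj: "\<sigma> i = \<sigma> i' \<longleftrightarrow> i = i'" for i i' using ts by metis
  have nrho2: "\<rho> \<bullet> n i = (if \<sigma> i = l then 1 else 0) - (if i = k then 1 else 0)"
    if "\<rho> \<in> ?V" "\<rho> \<in> \<Delta> k" "\<rho> \<in> \<Delta>t l" for \<rho> i k l
    using nrho[OF that(1)] uniqD[OF that(1,2)] uniqT[OF that(1,3)] by simp
  have gk: "y \<bullet> n i \<ge> - (if k = i then 1 else 0)" if y: "y \<in> \<Delta> k" for y i k
  proof -
    have "\<Delta> k \<subseteq> {y. n i \<bullet> y \<ge> - (if k = i then 1 else 0)}"
    proof (rule lemmaC[OF nefD])
      show "convex {y. n i \<bullet> y \<ge> - (if k = i then 1 else 0)}" by (rule convex_halfspace_ge)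
      show "0 \<in> {y. n i \<bullet> y \<ge> - (if k = i then 1 else 0)}" by simp
      show "\<forall>\<rho>\<in>?V. \<rho> \<in> \<Delta> k \<longrightarrow> \<rho> \<in> {y. n i \<bullet> y \<ge> - (if k = i then 1 else 0)}"
      proof (intro ballI impI)
        fix \<rho> assume \<rho>: "\<rho> \<in> ?V" "\<rho> \<in> \<Delta> k"
        obtain l where l: "\<rho> \<in> \<Delta>t l" using vert_in_part \<rho>(1) VT by blast
        show "\<rho> \<in> {y. n i \<bullet> y \<ge> - (if k = i then 1 else 0)}"
          using nrho2[OF \<rho> l, of i] by (auto simp: inner_commute)
      qed
    qed
    thus ?thesis using y by (auto simp: inner_commute)
  qed
  have onesum: "(\<Sum>i\<in>UNIV. (if i = k then 1 else 0::real)) = 1" for k :: 's by simp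
  have nsum: "(\<Sum>i\<in>UNIV. n i) = 0"
  proof (rule zero_on_verts[OF refl], intro ballI)
    fix \<rho> assume \<rho>: "\<rho> \<in> ?V"
    obtain k where k: "\<rho> \<in> \<Delta> k" using vert_in_part \<rho> by blast
    obtain l where l: "\<rho> \<in> \<Delta>t l" using vert_in_part \<rho> VT by blast
    have "\<rho> \<bullet> (\<Sum>i\<in>UNIV. n i) = (\<Sum>i\<in>UNIV. \<rho> \<bullet> n i)" by (rule inner_sum_right)
    also have "\<dots> = (\<Sum>i\<in>UNIV. (if i = \<tau> l then 1 else 0) - (if i = k then 1 else 0))"
    proof (rule sum.cong[OF HOL.refl])
      fix x
      have "\<sigma> x = l \<longleftrightarrow> x = \<tau> l" using st ts by metis
      thus "\<rho> \<bullet> n x = (if x = \<tau> l then 1 else 0) - (if x = k then 1 else 0)"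
        using nrho2[OF \<rho> k l, of x] by simp
    qed
    also have "\<dots> = 0" by (simp add: sum_subtractf)
    finally show "\<rho> \<bullet> (\<Sum>i\<in>UNIV. n i) = 0" .
  qed
  define e where "e j = (axis (\<tau> j) (1::real), n (\<tau> j))" for j
  have pe: "(a, x) \<bullet> e (\<sigma> i) = a $ i + x \<bullet> n i" for a x i
    by (simp add: e_def ts inner_axis)
  have E1a: "e j \<noteq> 0" for j by (simp add: e_def zero_prod_def)
  have E1c: "lattice_pt2 (e j)" for j
    using n unfolding e_def lattice_pt2_def by (auto simp: axis_comp)
  have E1b: "e j \<in> dual_cone ?K" for j
    unfolding dual_cone_def
  proof (safe)
    fix a x assume ax: "(a, x) \<in> ?K"
    obtain y where y: "\<forall>k. y k \<in> \<Delta> k" "x = (\<Sum>k\<in>UNIV. a $ k *\<^sub>R y k)" and a: "\<forall>i. a $ i \<ge> 0"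
      using cone_elim[OF ax] by blast
    define i where "i = \<tau> j"
    have j: "j = \<sigma> i" using st i_def by simp
    have "x \<bullet> n i = (\<Sum>k\<in>UNIV. a $ k * (y k \<bullet> n i))" by (simp add: y(2) inner_sum_left)
    also have "\<dots> \<ge> (\<Sum>k\<in>UNIV. a $ k * (- (if k = i then 1 else 0)))"
      using gk y(1) a by (intro sum_mono mult_left_mono) auto
    finally have "x \<bullet> n i \<ge> - a $ i" by (simp add: if_distrib cong: if_cong)
    thus "0 \<le> (a, x) \<bullet> e j" using pe j by simp
  qed
  have E2: "(\<Sum>j\<in>UNIV. e j) = deg_dual"
  proof -
    have f: "fst (\<Sum>j\<in>UNIV. e j) = (\<Sum>j\<in>UNIV. axis (\<tau> j) (1::real))" by (simp add: fst_sum e_def)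
    also have "\<dots> = (\<Sum>i\<in>UNIV. axis i (1::real))" using sum_bij_reindex[OF bijt, of "\<lambda>i. axis i 1"] by simp
    also have "\<dots> = (\<chi> i. 1)" by (simp add: vec_eq_iff axis_comp)
    finally have 1: "fst (\<Sum>j\<in>UNIV. e j) = (\<chi> i. 1)" .
    have "snd (\<Sum>j\<in>UNIV. e j) = (\<Sum>j\<in>UNIV. n (\<tau> j))" by (simp add: snd_sum e_def)
    also have "\<dots> = 0" using sum_bij_reindex[OF bijt, of n] nsum by simp
    finally have 2: "snd (\<Sum>j\<in>UNIV. e j) = 0" .
    show ?thesis using 1 2 unfolding deg_dual_def by (simp add: prod_eq_iff)
  qed
  have E3: "\<Delta>t (\<sigma> i) = snd ` S_tilde ?K e (\<sigma> i)" for i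
  proof -
    have Sch: "z \<in> S_tilde ?K e (\<sigma> i) \<longleftrightarrow> z \<in> ?K \<and> (\<forall>i'. z \<bullet> e (\<sigma> i') = (if i' = i then 1 else 0))" for z
    proof
      assume z: "z \<in> S_tilde ?K e (\<sigma> i)"
      show "z \<in> ?K \<and> (\<forall>i'. z \<bullet> e (\<sigma> i') = (if i' = i then 1 else 0))"
        using z sinj unfolding S_tilde_def by auto
    next
      assume z: "z \<in> ?K \<and> (\<forall>i'. z \<bullet> e (\<sigma> i') = (if i' = i then 1 else 0))"
      have "z \<bullet> e j = 0" if "j \<noteq> \<sigma> i" for j
      proof -
        have "\<tau> j \<noteq> i" using that st by metis
        thus ?thesis using z[THEN conjunct2, rule_format, of "\<tau> j"] st by simp
      qed
      thus "z \<in> S_tilde ?K e (\<sigma> i)" using z unfolding S_tilde_def by auto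
    qed
    have cvxK: "convex ?K"
      using cone_convex[of \<Delta>] z lp_convex[OF nef_lp[OF nefD]] by blast
    have cvxT: "convex (\<Delta>t (\<sigma> i))" using lp_convex[OF nef_lp[OF nefT]] .
    show ?thesis
    proof (rule equalityI)
      show "\<Delta>t (\<sigma> i) \<subseteq> snd ` S_tilde ?K e (\<sigma> i)"
      proof
        fix x assume x: "x \<in> \<Delta>t (\<sigma> i)"
        define A where "A x = (\<chi> i'. (if i' = i then 1 else 0) - x \<bullet> n i')" for x
        have Acomp: "A x $ i' = (if i' = i then 1 else 0) - x \<bullet> n i'" for x i'
          by (simp add: A_def)
        have "\<Delta>t (\<sigma> i) \<subseteq> {x. (A x, x) \<in> ?K}"
        proof (rule lemmaC[OF nefT])
          show "convex {x. (A x, x) \<in> ?K}"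
            unfolding convex_def
          proof (intro allI impI ballI)
            fix x1 x2 and u v :: real
            assume x1: "x1 \<in> {x. (A x, x) \<in> ?K}" and x2: "x2 \<in> {x. (A x, x) \<in> ?K}"
              and uv: "0 \<le> u" "0 \<le> v" "u + v = 1"
            have "A (u *\<^sub>R x1 + v *\<^sub>R x2) = u *\<^sub>R A x1 + v *\<^sub>R A x2"
            proof (subst vec_eq_iff, intro allI)
              fix i'
              have "(if i' = i then 1 else 0::real) = u * (if i' = i then 1 else 0) + v * (if i' = i then 1 else 0)"
                using uv by (simp add: distrib_right[symmetric])
              thus "A (u *\<^sub>R x1 + v *\<^sub>R x2) $ i' = (u *\<^sub>R A x1 + v *\<^sub>R A x2) $ i'"
                by (simp add: Acomp inner_add_left algebra_simps)
            qed
            hence "(A (u *\<^sub>R x1 + v *\<^sub>R x2), u *\<^sub>R x1 + v *\<^sub>R x2) = u *\<^sub>R (A x1, x1) + v *\<^sub>R (A x2, x2)"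
              by simp
            moreover have "u *\<^sub>R (A x1, x1) + v *\<^sub>R (A x2, x2) \<in> ?K"
              using convexD[OF cvxK] x1 x2 uv by blast
            ultimately show "u *\<^sub>R x1 + v *\<^sub>R x2 \<in> {x. (A x, x) \<in> ?K}" by simp
          qed
          have "A 0 = axis i 1" by (simp add: vec_eq_iff Acomp axis_comp)
          thus "0 \<in> {x. (A x, x) \<in> ?K}" using cone_axis[OF z, of 0 i] z by simp
          show "\<forall>\<rho>\<in>vertices (hull_union \<Delta>t). \<rho> \<in> \<Delta>t (\<sigma> i) \<longrightarrow> \<rho> \<in> {x. (A x, x) \<in> ?K}"
          proof (intro ballI impI)
            fix \<rho> assume \<rho>: "\<rho> \<in> vertices (hull_union \<Delta>t)" "\<rho> \<in> \<Delta>t (\<sigma> i)"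
            have \<rho>V: "\<rho> \<in> ?V" using \<rho>(1) VT by simp
            obtain k where k: "\<rho> \<in> \<Delta> k" using vert_in_part \<rho>V by blast
            have "A \<rho> = axis k 1"
            proof (subst vec_eq_iff, intro allI)
              fix i'
              show "A \<rho> $ i' = axis k 1 $ i'"
                using nrho2[OF \<rho>V k \<rho>(2), of i'] sinj[of i' i] by (simp add: Acomp axis_comp)
            qed
            thus "\<rho> \<in> {x. (A x, x) \<in> ?K}" using cone_axis[OF z k] by simp
          qed
        qed
        hence AK: "(A x, x) \<in> ?K" using x by blast
        have "(A x, x) \<in> S_tilde ?K e (\<sigma> i)"
          using AK by (subst Sch) (simp add: pe Acomp)
        thus "x \<in> snd ` S_tilde ?K e (\<sigma> i)" by force
      qed
    next
      show "snd ` S_tilde ?K e (\<sigma> i) \<subseteq> \<Delta>t (\<sigma> i)"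
      proof
        fix x assume "x \<in> snd ` S_tilde ?K e (\<sigma> i)"
        then obtain a where aS: "(a, x) \<in> S_tilde ?K e (\<sigma> i)" by force
        have aK: "(a, x) \<in> ?K" and cond: "\<forall>i'. a $ i' + x \<bullet> n i' = (if i' = i then 1 else 0)"
          using aS by (subst (asm) Sch, simp add: pe)+
        obtain y where y: "\<forall>k. y k \<in> \<Delta> k" "x = (\<Sum>k\<in>UNIV. a $ k *\<^sub>R y k)" and a: "\<forall>i. a $ i \<ge> 0"
          using cone_elim[OF aK] by blast
        have xn: "x \<bullet> n i' = (\<Sum>k\<in>UNIV. a $ k * (y k \<bullet> n i'))" for i'
          by (simp add: y(2) inner_sum_left)
        have "(\<Sum>i'\<in>UNIV. a $ i' + x \<bullet> n i') = (\<Sum>i'\<in>UNIV. (if i' = i then 1 else 0::real))"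
          using cond by simp
        moreover have "(\<Sum>i'\<in>UNIV. x \<bullet> n i') = 0" using nsum by (simp add: inner_sum_right[symmetric])
        ultimately have asum: "(\<Sum>k\<in>UNIV. a $ k) = 1" by (simp add: sum.distrib)
        have zterm: "a $ k * (y k \<bullet> n i' + (if k = i' then 1 else 0)) = 0" if "i' \<noteq> i" for k i'
        proof -
          have "(\<Sum>k\<in>UNIV. a $ k * (y k \<bullet> n i' + (if k = i' then 1 else 0)))
              = x \<bullet> n i' + (\<Sum>k\<in>UNIV. a $ k * (if k = i' then 1 else 0))"
            by (simp add: xn distrib_left sum.distrib)
          also have "\<dots> = x \<bullet> n i' + a $ i'" by (simp add: if_distrib cong: if_cong)
          also have "\<dots> = 0" using cond[rule_format, of i'] that by simp
          finally have s0: "(\<Sum>k\<in>UNIV. a $ k * (y k \<bullet> n i' + (if k = i' then 1 else 0))) = 0" .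
          have nn: "\<forall>k\<in>UNIV. 0 \<le> a $ k * (y k \<bullet> n i' + (if k = i' then 1 else 0))"
          proof
            fix k
            have "y k \<bullet> n i' \<ge> - (if k = i' then 1 else 0)" using gk y(1) by blast
            thus "0 \<le> a $ k * (y k \<bullet> n i' + (if k = i' then 1 else 0))" using a by simp
          qed
          show ?thesis using s0 nn by (simp add: sum_nonneg_eq_0_iff)
        qed
        have Fclaim: "yy \<in> \<Delta>t (\<sigma> i)"
          if yy: "yy \<in> \<Delta> k" "\<forall>i'\<in>-{i}. yy \<bullet> n i' = - (if k = i' then 1 else 0)" for yy k
        proof -
          define F where "F = \<Delta> k \<inter> (\<Inter>i'\<in>-{i}. {v. n i' \<bullet> v = - (if k = i' then 1 else 0)})"
          have F': "F = {v \<in> \<Delta> k. \<forall>i'\<in>-{i}. v \<bullet> n i' = - (if k = i' then 1 else 0)}"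
            unfolding F_def by (auto simp: inner_commute)
          have lpk: "lattice_polytope (\<Delta> k)" using nef_lp[OF nefD] .
          have "compact F" unfolding F_def
            by (intro compact_Int_closed lp_compact[OF lpk] closed_INT ballI closed_hyperplane)
          moreover have "convex F" unfolding F_def
            by (intro convex_Int lp_convex[OF lpk] convex_INT ballI convex_hyperplane)
          ultimately have "F = convex hull {v. v extreme_point_of F}" by (rule Krein_Milman_Minkowski)
          also have "\<dots> \<subseteq> \<Delta>t (\<sigma> i)"
          proof (rule hull_minimal)
            show "convex (\<Delta>t (\<sigma> i))" by (rule cvxT)
          next
           show "{v. v extreme_point_of F} \<subseteq> \<Delta>t (\<sigma> i)"
           proof
            fix v assume "v \<in> {v. v extreme_point_of F}"
            hence vF: "v extreme_point_of F" by simp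
            have vk: "v extreme_point_of \<Delta> k"
            proof (rule extreme_min_face)
              show "v extreme_point_of {y \<in> \<Delta> k. \<forall>i'\<in>-{i}. y \<bullet> n i' = - (if k = i' then 1 else 0)}"
                using vF F' by simp
              show "\<forall>y\<in>\<Delta> k. \<forall>i'\<in>-{i}. - (if k = i' then 1 else 0) \<le> y \<bullet> n i'"
                using gk by blast
            qed
            show "v \<in> \<Delta>t (\<sigma> i)"
            proof (cases "v = 0")
              case True thus ?thesis using zT by simp
            next
              case False
              have vV: "v \<in> ?V" using lemmaB[OF nefD vk False] .
              have vD: "v \<in> \<Delta> k" using vk extreme_point_of_def by blast
              have vFm: "v \<in> F" using vF extreme_point_of_def by blast
              obtain l where l: "v \<in> \<Delta>t l" using vert_in_part vV VT by blast
              have "\<tau> l = i"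
              proof (rule ccontr)
                assume ne: "\<tau> l \<noteq> i"
                have "v \<bullet> n (\<tau> l) = - (if k = \<tau> l then 1 else 0)" using vFm F' ne by auto
                moreover have "v \<bullet> n (\<tau> l) = (if \<sigma> (\<tau> l) = l then 1 else 0) - (if \<tau> l = k then 1 else 0)"
                  using nrho2[OF vV vD l] .
                ultimately show False using st by (simp split: if_splits)
              qed
              hence "l = \<sigma> i" using st by metis
              thus ?thesis using l by simp
            qed
           qed
          qed
          finally show ?thesis using yy F' by blast
        qed
        define y' where "y' k = (if a $ k = 0 then 0 else y k)" for k
        have y'T: "y' k \<in> \<Delta>t (\<sigma> i)" for k
        proof (cases "a $ k = 0")
          case True thus ?thesis using zT by (simp add: y'_def)
        next
          case False
          have "\<forall>i'\<in>-{i}. y k \<bullet> n i' = - (if k = i' then 1 else 0)"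
          proof
            fix i' assume "i' \<in> -{i}"
            hence "i' \<noteq> i" by simp
            from zterm[OF this, of k] False
            have "y k \<bullet> n i' + (if k = i' then 1 else 0) = 0" by simp
            thus "y k \<bullet> n i' = - (if k = i' then 1 else 0)" by (cases "k = i'") auto
          qed
          hence "y k \<in> \<Delta>t (\<sigma> i)" using Fclaim[of "y k" k] y(1) by blast
          thus ?thesis using False by (simp add: y'_def)
        qed
        have "x = (\<Sum>k\<in>UNIV. a $ k *\<^sub>R y' k)" unfolding y(2) y'_def
          by (rule sum.cong) auto
        also have "\<dots> \<in> \<Delta>t (\<sigma> i)"
          by (rule convex_sum[OF _ cvxT]) (use asum a y'T in auto)
        finally show "x \<in> \<Delta>t (\<sigma> i)" .
      qed
    qed
  qed
  have E3': "\<forall>j. \<Delta>t j = snd ` S_tilde ?K e j" using E3 st by metis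
  show ?thesis using E1a E1b E1c E2 E3' by blast
qed



theorem proposition2p7:
  fixes \<Delta> \<Delta>t :: "'s::finite \<Rightarrow> (real^'d) set"
  assumes "nef_partition \<Delta>"
    and "reflexive_polytope (hull_union \<Delta>)"
    and "nef_partition \<Delta>t"
    and "hull_union \<Delta>t = hull_union \<Delta>"
  shows "(\<exists>e :: 's \<Rightarrow> (real^'s) \<times> (real^'d).
            (\<forall>i. e i \<noteq> 0 \<and> e i \<in> dual_cone (nef_cone \<Delta>) \<and> lattice_pt2 (e i))
            \<and> (\<Sum>i\<in>UNIV. e i) = deg_dual
            \<and> (\<forall>i. \<Delta>t i = snd ` S_tilde (nef_cone \<Delta>) e i))
         \<longleftrightarrow>
         (\<exists>\<sigma> :: 's \<Rightarrow> 's. bij \<sigma> \<and>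
            (\<forall>i. lin_equiv (hull_union \<Delta>)
                   (nef_divisor (hull_union \<Delta>) (\<Delta>t (\<sigma> i)))
                   (nef_divisor (hull_union \<Delta>) (\<Delta> i))))"
proof
  assume "\<exists>e :: 's \<Rightarrow> (real^'s) \<times> (real^'d).
            (\<forall>i. e i \<noteq> 0 \<and> e i \<in> dual_cone (nef_cone \<Delta>) \<and> lattice_pt2 (e i))
            \<and> (\<Sum>i\<in>UNIV. e i) = deg_dual
            \<and> (\<forall>i. \<Delta>t i = snd ` S_tilde (nef_cone \<Delta>) e i)"
  then obtain e :: "'s \<Rightarrow> (real^'s) \<times> (real^'d)" where
    "\<forall>i. e i \<noteq> 0 \<and> e i \<in> dual_cone (nef_cone \<Delta>) \<and> lattice_pt2 (e i)"
    "(\<Sum>i\<in>UNIV. e i) = deg_dual" "\<forall>i. \<Delta>t i = snd ` S_tilde (nef_cone \<Delta>) e i" by blast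
  thus "\<exists>\<sigma> :: 's \<Rightarrow> 's. bij \<sigma> \<and>
            (\<forall>i. lin_equiv (hull_union \<Delta>)
                   (nef_divisor (hull_union \<Delta>) (\<Delta>t (\<sigma> i)))
                   (nef_divisor (hull_union \<Delta>) (\<Delta> i)))"
    using fwd[OF assms] by blast
next
  assume "\<exists>\<sigma> :: 's \<Rightarrow> 's. bij \<sigma> \<and>
            (\<forall>i. lin_equiv (hull_union \<Delta>)
                   (nef_divisor (hull_union \<Delta>) (\<Delta>t (\<sigma> i)))
                   (nef_divisor (hull_union \<Delta>) (\<Delta> i)))"
  then obtain \<sigma> :: "'s \<Rightarrow> 's" where "bij \<sigma>"
    "\<forall>i. lin_equiv (hull_union \<Delta>)
                   (nef_divisor (hull_union \<Delta>) (\<Delta>t (\<sigma> i)))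
                   (nef_divisor (hull_union \<Delta>) (\<Delta> i))" by blast
  thus "\<exists>e :: 's \<Rightarrow> (real^'s) \<times> (real^'d).
            (\<forall>i. e i \<noteq> 0 \<and> e i \<in> dual_cone (nef_cone \<Delta>) \<and> lattice_pt2 (e i))
            \<and> (\<Sum>i\<in>UNIV. e i) = deg_dual
            \<and> (\<forall>i. \<Delta>t i = snd ` S_tilde (nef_cone \<Delta>) e i)"
    using bwd[OF assms] by blast
qed


end
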